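(* For $d\in[0,D]$ with $Ld<f_BT$, let $X(d)$ be the optimal value of \[ \min_{P,\{\beta_n\}}\ P+\sum_{n=1}^N\beta_n^2(Ph_n+\sigma^2W) \] subject to \[ \frac{P\left(\sum_{n=1}^N\sqrt{h_ng_n}\,\beta_n\right)^2}{\sigma^2W\left(1+\sum_{n=1}^N g_n\beta_n^2\right)}\ge e^{\frac{2d}{W(T-Ld/f_B)}}-1,\qquad P\ge0,\quad \beta_n\ge0\ \ \forall n. \] Then $X(d)$ is a monotonically increasing function of $d$.
   Context: All parameters $N, h_n, g_n, W, \sigma^2, L, D, T, f_B$ are given positive constants, and $n$ ranges over $\{1,\dots,N\}$. *)

theory Defs
  imports Complex_Main
begin

definition feasible ::
  "nat \<Rightarrow> (nat \<Rightarrow> real) \<Rightarrow> (nat \<Rightarrow> real) \<Rightarrow> real \<Rightarrow> real \<Rightarrow> real \<Rightarrow> real \<Rightarrow> real \<Rightarrow> real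
   \<Rightarrow> real \<Rightarrow> (nat \<Rightarrow> real) \<Rightarrow> bool" where
  "feasible N h g W \<sigma> L T fB d P \<beta> \<longleftrightarrow>
     P \<ge> 0 \<and> (\<forall>n\<in>{1..N}. \<beta> n \<ge> 0) \<and>
     P * (\<Sum>n=1..N. sqrt (h n * g n) * \<beta> n)^2
       / (\<sigma>^2 * W * (1 + (\<Sum>n=1..N. g n * \<beta> n ^ 2)))
     \<ge> exp (2 * d / (W * (T - L * d / fB))) - 1"

definition objective :: "nat \<Rightarrow> (nat \<Rightarrow> real) \<Rightarrow> real \<Rightarrow> real \<Rightarrow> real \<Rightarrow> (nat \<Rightarrow> real) \<Rightarrow> real" where
  "objective N h W \<sigma> P \<beta> = P + (\<Sum>n=1..N. \<beta> n ^ 2 * (P * h n + \<sigma>^2 * W))"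

definition Xopt ::
  "nat \<Rightarrow> (nat \<Rightarrow> real) \<Rightarrow> (nat \<Rightarrow> real) \<Rightarrow> real \<Rightarrow> real \<Rightarrow> real \<Rightarrow> real \<Rightarrow> real \<Rightarrow> real \<Rightarrow> real" where
  "Xopt N h g W \<sigma> L T fB d =
     Inf {objective N h W \<sigma> P \<beta> | P \<beta>. feasible N h g W \<sigma> L T fB d P \<beta>}"

end

theory Submission
  imports Defs
begin

theorem lemma9:
  fixes N :: nat and h g :: "nat \<Rightarrow> real" and W \<sigma> L D T fB :: real
  assumes "N > 0" and "\<forall>n\<in>{1..N}. h n > 0" and "\<forall>n\<in>{1..N}. g n > 0"
    and "W > 0" and "\<sigma> > 0" and "L > 0" and "D > 0" and "T > 0" and "fB > 0"
  shows "\<forall>d1 d2. d1 \<in> {0..D} \<and> d2 \<in> {0..D} \<and> L * d1 < fB * T \<and> L * d2 < fB * T \<and> d1 \<le> d2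
           \<longrightarrow> Xopt N h g W \<sigma> L T fB d1 \<le> Xopt N h g W \<sigma> L T fB d2"
proof (intro allI impI)
  fix d1 d2 assume H: "d1 \<in> {0..D} \<and> d2 \<in> {0..D} \<and> L * d1 < fB * T \<and> L * d2 < fB * T \<and> d1 \<le> d2"
  define A where "A d = {objective N h W \<sigma> P \<beta> | P \<beta>. feasible N h g W \<sigma> L T fB d P \<beta>}" for d
  have den1: "0 < W * (T - L * d1 / fB)" and den2: "0 < W * (T - L * d2 / fB)"
    using H assms by (auto simp: field_simps)
  have dle: "W * (T - L * d2 / fB) \<le> W * (T - L * d1 / fB)"
    using H assms by (auto simp: field_simps intro!: mult_left_mono)
  have "2 * d1 / (W * (T - L * d1 / fB)) \<le> 2 * d2 / (W * (T - L * d2 / fB))"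
    by (rule frac_le) (use H den2 dle in auto)
  hence thr: "exp (2 * d1 / (W * (T - L * d1 / fB))) - 1 \<le> exp (2 * d2 / (W * (T - L * d2 / fB))) - 1"
    by simp
  have sub: "A d2 \<subseteq> A d1"
  proof
    fix x assume "x \<in> A d2"
    then obtain P \<beta> where "x = objective N h W \<sigma> P \<beta>" "feasible N h g W \<sigma> L T fB d2 P \<beta>"
      unfolding A_def by blast
    moreover have "feasible N h g W \<sigma> L T fB d1 P \<beta>"
      using calculation(2) thr unfolding feasible_def by linarith
    ultimately show "x \<in> A d1" unfolding A_def by blast
  qed
  have bdd: "bdd_below (A d1)"
  proof (rule bdd_belowI[of _ 0])
    fix x assume "x \<in> A d1"
    then obtain P \<beta> where x: "x = objective N h W \<sigma> P \<beta>" and f: "feasible N h g W \<sigma> L T fB d1 P \<beta>"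
      unfolding A_def by blast
    have "0 \<le> (\<Sum>n=1..N. \<beta> n ^ 2 * (P * h n + \<sigma>^2 * W))"
    proof (intro sum_nonneg)
      fix n assume n: "n \<in> {1..N}"
      have "h n > 0" using n assms(2) by blast
      moreover have "P \<ge> 0" using f by (simp add: feasible_def)
      ultimately show "0 \<le> \<beta> n ^ 2 * (P * h n + \<sigma>^2 * W)" using assms(4)
        by (intro mult_nonneg_nonneg add_nonneg_nonneg) auto
    qed
    thus "0 \<le> x" using f x by (simp add: objective_def feasible_def)
  qed
  define c where "c = exp (2 * d2 / (W * (T - L * d2 / fB))) - 1"
  define S where "S = (\<Sum>n=1..N. sqrt (h n * g n))"
  define G where "G = (\<Sum>n=1..N. g n)"
  have Spos: "S > 0" unfolding S_def using assms
    by (intro sum_pos) auto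
  have Gnn: "G \<ge> 0" unfolding G_def using assms by (intro sum_nonneg) (auto intro: less_imp_le)
  define K where "K = \<sigma>^2 * W * (1 + G) / S^2"
  have Kpos: "K > 0" unfolding K_def using Spos Gnn assms by auto
  have "feasible N h g W \<sigma> L T fB d2 (\<bar>c\<bar> * K) (\<lambda>_. 1)"
  proof -
    have "\<bar>c\<bar> * K * S^2 / (\<sigma>^2 * W * (1 + G)) = \<bar>c\<bar>"
    proof -
      have "\<sigma>^2 * W * (1 + G) > 0" using Gnn assms by simp
      moreover have "S^2 > 0" using Spos by simp
      ultimately show ?thesis unfolding K_def
        using assms(4,5) Gnn by (simp add: divide_simps)

    qed
    hence "c \<le> \<bar>c\<bar> * K * S^2 / (\<sigma>^2 * W * (1 + G))" by simp
    thus ?thesis unfolding feasible_def using Kpos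
      by (simp add: S_def G_def c_def)
  qed
  hence ne: "A d2 \<noteq> {}" unfolding A_def by blast
  have "Inf (A d1) \<le> Inf (A d2)" by (rule cInf_superset_mono[OF ne bdd sub])
  thus "Xopt N h g W \<sigma> L T fB d1 \<le> Xopt N h g W \<sigma> L T fB d2"
    unfolding Xopt_def A_def by simp
qed

end
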